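(* Consider the joint caching and recommendation problem $$\max_{\mathbf X,\mathbf Y}\ \sum_{u=1}^{U}\sum_{i=1}^{N} y_i\Big[w_u^{\mathrm{rec}}\frac{x_{ui}}{R}+(1-w_u^{\mathrm{rec}})\,p_u^{\mathrm{pref}}(i)\Big]$$ subject to $\sum_i y_i\le C$, $\sum_i x_{ui}\le R$ for all $u$, and $x_{ui},y_i\in\{0,1\}$ for all $u,i$, where $1\le R\le C\le N$. Then the maximum is attained by caching a set $\mathbf Y^*$ of $C$ contents maximizing $\sum_i y_i\,\hat p_i$ (i.e. $C$ contents with largest $\hat p_i$) and, for each user $u$, recommending any $R$ contents among the cached ones ($x_{ui}=1$ only if $y_i=1$). In particular, the optimal caching decision is $$\mathbf Y^*\in\operatorname{argmax}_{\mathbf Y:\ \sum_i y_i\le C}\ \sum_i y_i\sum_u(1-w_u^{\mathrm{rec}})p_u^{\mathrm{pref}}(i).$$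
   Context: There are $N$ contents $\mathcal N=\{1,\dots,N\}$ and $U$ users $\mathcal U=\{1,\dots,U\}$. A base station has a cache of capacity $C$ contents and recommends at most $R\le C$ contents to each user. $y_i\in\{0,1\}$ indicates whether content $i$ is cached; $x_{ui}\in\{0,1\}$ indicates whether content $i$ is recommended to user $u$. For each user $u$, $p_u^{\mathrm{pref}}(\cdot)$ is a probability distribution on $\mathcal N$ (the request distribution without recommendations), and $w_u^{\mathrm{rec}}\in[0,1]$ is the probability that user $u$ accepts recommendations. The request probability of user $u$ for content $i$ is $p_u^{\mathrm{req}}(i)=w_u^{\mathrm{rec}}\,x_{ui}/R+(1-w_u^{\mathrm{rec}})p_u^{\mathrm{pref}}(i)$ (users choose uniformly among recommended contents). Define $\hat p_i:=\sum_u(1-w_u^{\mathrm{rec}})p_u^{\mathrm{pref}}(i)$. *)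

theory Defs
  imports Complex_Main
begin

text \<open>Binary decisions are encoded by sets: the cache is the set Y of contents i with y_i = 1,
  and X u is the set of contents i with x_ui = 1. Contents are 1..N, users are 1..U.\<close>

definition feasible :: "nat \<Rightarrow> nat \<Rightarrow> nat \<Rightarrow> nat \<Rightarrow> (nat \<Rightarrow> nat set) \<Rightarrow> nat set \<Rightarrow> bool" where
  "feasible N U C R X Y \<longleftrightarrow>
     Y \<subseteq> {1..N} \<and> card Y \<le> C \<and>
     (\<forall>u\<in>{1..U}. X u \<subseteq> {1..N} \<and> card (X u) \<le> R)"

definition objective ::
  "nat \<Rightarrow> nat \<Rightarrow> nat \<Rightarrow> (nat \<Rightarrow> real) \<Rightarrow> (nat \<Rightarrow> nat \<Rightarrow> real) \<Rightarrow> (nat \<Rightarrow> nat set) \<Rightarrow> nat set \<Rightarrow> real" where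
  "objective N U R w p X Y =
     (\<Sum>u\<in>{1..U}. \<Sum>i\<in>{1..N}.
        (if i \<in> Y then 1 else 0) *
        (w u * (if i \<in> X u then 1 else 0) / real R + (1 - w u) * p u i))"

definition phat :: "nat \<Rightarrow> (nat \<Rightarrow> real) \<Rightarrow> (nat \<Rightarrow> nat \<Rightarrow> real) \<Rightarrow> nat \<Rightarrow> real" where
  "phat U w p i = (\<Sum>u\<in>{1..U}. (1 - w u) * p u i)"

end

theory Submission
  imports Defs
begin

lemma obj_eq:
  assumes "Y \<subseteq> {1..N}"
  shows "objective N U R w p X Y =
     (\<Sum>u\<in>{1..U}. w u * real (card (Y \<inter> X u)) / real R) + (\<Sum>i\<in>Y. phat U w p i)"
proof -
  have fY: "finite Y" using assms finite_subset by blast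
  have A: "(\<Sum>i\<in>{1..N}. (if i \<in> Y then 1 else 0) *
        (w u * (if i \<in> X u then 1 else 0) / real R + (1 - w u) * p u i))
      = (\<Sum>i\<in>{1..N}. (if i \<in> Y \<inter> X u then w u / real R else 0))
        + (\<Sum>i\<in>{1..N}. (if i \<in> Y then (1 - w u) * p u i else 0))" for u
    by (subst sum.distrib[symmetric]) (rule sum.cong, auto)
  have B: "(\<Sum>i\<in>{1..N}. (if i \<in> Y \<inter> X u then w u / real R else 0))
      = w u * real (card (Y \<inter> X u)) / real R" for u
  proof -
    have "(\<Sum>i\<in>{1..N}. (if i \<in> Y \<inter> X u then w u / real R else 0))
        = (\<Sum>i\<in>{1..N} \<inter> (Y \<inter> X u). w u / real R)"
      by (simp only: sum.inter_restrict[OF finite_atLeastAtMost])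
    also have "{1..N} \<inter> (Y \<inter> X u) = Y \<inter> X u" using assms by blast
    finally show ?thesis by simp
  qed
  have C: "(\<Sum>i\<in>{1..N}. (if i \<in> Y then (1 - w u) * p u i else 0))
      = (\<Sum>i\<in>Y. (1 - w u) * p u i)" for u
  proof -
    have "(\<Sum>i\<in>{1..N}. (if i \<in> Y then (1 - w u) * p u i else 0))
        = (\<Sum>i\<in>{1..N} \<inter> Y. (1 - w u) * p u i)"
      by (simp only: sum.inter_restrict[OF finite_atLeastAtMost])
    also have "{1..N} \<inter> Y = Y" using assms by blast
    finally show ?thesis by simp
  qed
  have "objective N U R w p X Y = (\<Sum>u\<in>{1..U}. w u * real (card (Y \<inter> X u)) / real R
        + (\<Sum>i\<in>Y. (1 - w u) * p u i))"
    unfolding objective_def using A B C by simp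
  also have "\<dots> = (\<Sum>u\<in>{1..U}. w u * real (card (Y \<inter> X u)) / real R)
       + (\<Sum>u\<in>{1..U}. \<Sum>i\<in>Y. (1 - w u) * p u i)"
    by (simp add: sum.distrib)
  also have "(\<Sum>u\<in>{1..U}. \<Sum>i\<in>Y. (1 - w u) * p u i) = (\<Sum>i\<in>Y. phat U w p i)"
    unfolding phat_def by (rule sum.swap)
  finally show ?thesis .
qed

theorem mainTheorem1:
  fixes N U C R :: nat
    and w :: "nat \<Rightarrow> real" and p :: "nat \<Rightarrow> nat \<Rightarrow> real"
    and Xs :: "nat \<Rightarrow> nat set" and Ys :: "nat set"
  assumes R_pos: "1 \<le> R" and RC: "R \<le> C" and CN: "C \<le> N"
    and w_range: "\<forall>u\<in>{1..U}. 0 \<le> w u \<and> w u \<le> 1"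
    and p_nonneg: "\<forall>u\<in>{1..U}. \<forall>i\<in>{1..N}. 0 \<le> p u i"
    and p_sum: "\<forall>u\<in>{1..U}. (\<Sum>i\<in>{1..N}. p u i) = 1"
    and Ys_sub: "Ys \<subseteq> {1..N}" and Ys_card: "card Ys = C"
    and Ys_opt: "\<forall>Y. Y \<subseteq> {1..N} \<and> card Y \<le> C \<longrightarrow>
                    (\<Sum>i\<in>Y. phat U w p i) \<le> (\<Sum>i\<in>Ys. phat U w p i)"
    and Xs_rec: "\<forall>u\<in>{1..U}. Xs u \<subseteq> Ys \<and> card (Xs u) = R"
  shows "feasible N U C R Xs Ys \<and>
         (\<forall>X Y. feasible N U C R X Y \<longrightarrow>
            objective N U R w p X Y \<le> objective N U R w p Xs Ys)"
proof
  show "feasible N U C R Xs Ys"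
    unfolding feasible_def using Ys_sub Ys_card Xs_rec by auto
next
  have Rp: "real R > 0" using R_pos by simp
  have objs: "objective N U R w p Xs Ys = (\<Sum>u\<in>{1..U}. w u) + (\<Sum>i\<in>Ys. phat U w p i)"
  proof -
    have "Ys \<inter> Xs u = Xs u" if "u \<in> {1..U}" for u using Xs_rec that by blast
    hence "(\<Sum>u\<in>{1..U}. w u * real (card (Ys \<inter> Xs u)) / real R) = (\<Sum>u\<in>{1..U}. w u)"
      using Xs_rec Rp by (intro sum.cong) auto
    thus ?thesis using obj_eq[OF Ys_sub] by simp
  qed
  show "\<forall>X Y. feasible N U C R X Y \<longrightarrow>
            objective N U R w p X Y \<le> objective N U R w p Xs Ys"
  proof (intro allI impI)
    fix X Y assume f: "feasible N U C R X Y"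
    hence Ysub: "Y \<subseteq> {1..N}" and Yc: "card Y \<le> C"
      and Xu: "\<forall>u\<in>{1..U}. X u \<subseteq> {1..N} \<and> card (X u) \<le> R"
      unfolding feasible_def by auto
    have "w u * real (card (Y \<inter> X u)) / real R \<le> w u" if u: "u \<in> {1..U}" for u
    proof -
      have fin: "finite (X u)" using Xu u finite_subset by blast
      have "card (Y \<inter> X u) \<le> card (X u)" using fin by (simp add: card_mono)
      hence c: "real (card (Y \<inter> X u)) \<le> real R" using Xu u by force
      have "w u * real (card (Y \<inter> X u)) \<le> w u * real R"
        using w_range u c by (intro mult_left_mono) auto
      thus ?thesis using Rp by (simp add: divide_le_eq)
    qed
    hence s1: "(\<Sum>u\<in>{1..U}. w u * real (card (Y \<inter> X u)) / real R) \<le> (\<Sum>u\<in>{1..U}. w u)"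
      by (rule sum_mono)
    have s2: "(\<Sum>i\<in>Y. phat U w p i) \<le> (\<Sum>i\<in>Ys. phat U w p i)"
      using Ys_opt Ysub Yc by blast
    show "objective N U R w p X Y \<le> objective N U R w p Xs Ys"
      using obj_eq[OF Ysub, of U R w p X] objs s1 s2 by linarith
  qed
qed

end
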